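(* Let $X$ be a real normed space and $\mathcal M=\{M_1,\dots,M_n\}$ a finite family of nonempty compact convex subsets of $X$, with $\Sigma(\mathcal M)\neq\emptyset$ and $d=(d_1,\dots,d_n)\in\Omega(\mathcal M)$. Then for every $K\in\Sigma_d(\mathcal M)$ there exist $i$ and $x\in M_i$ with $U_{d_i}(x)\cap K=\emptyset$. In particular, some $M_i$ contains a point $x$ with $U_{d_i}(x)\cap K_d=\emptyset$ (a $d$-far point for $M_i$).
   Context: For $p\in X$ and $A\subset X$: $|p\,A|=\inf_{a\in A}|p\,a|$ ($=\infty$ if $A=\emptyset$); $B_r(A)=\{p:|p\,A|\le r\}$, $U_r(x)=\{p:|p\,x|<r\}$. For nonempty $A,B$, $d_H(A,B)=\max\{\sup_{a\in A}|a\,B|,\sup_{b\in B}|b\,A|\}$. Let $\mathcal P^f_{\mathrm{Cl}}(X)$ be the set of all nonempty closed $Y\subset X$ with $d_H(Y,M_1)<\infty$. $S_{\mathcal M}(Y)=\sum_i d_H(Y,M_i)$; $\Sigma(\mathcal M)$ is the set of minimizers of $S_{\mathcal M}$ over $\mathcal P^f_{\mathrm{Cl}}(X)$; for $K\in\Sigma(\mathcal M)$, $d(K)=(d_H(K,M_1),\dots,d_H(K,M_n))$; $\Omega(\mathcal M)=\{d(K):K\in\Sigma(\mathcal M)\}$; for $d\in\Omega(\mathcal M)$, $\Sigma_d(\mathcal M)=\{K\in\Sigma(\mathcal M):d(K)=d\}$ and $K_d=\bigcap_{i=1}^nB_{d_i}(M_i)$. *)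

theory Defs
  imports "HOL-Analysis.Analysis"
begin

(* |p A| = inf_{a in A} |p a|, = \<infinity> for empty A (INF over {} is top) *)
definition pdist :: "'a::metric_space \<Rightarrow> 'a set \<Rightarrow> ereal" where
  "pdist p A = (INF a\<in>A. ereal (dist p a))"

definition dH :: "'a::metric_space set \<Rightarrow> 'a set \<Rightarrow> ereal" where
  "dH A B = max (SUP a\<in>A. pdist a B) (SUP b\<in>B. pdist b A)"

definition Bset :: "ereal \<Rightarrow> 'a::metric_space set \<Rightarrow> 'a set" where
  "Bset r A = {p. pdist p A \<le> r}"

definition Uball :: "ereal \<Rightarrow> 'a::metric_space \<Rightarrow> 'a set" where
  "Uball r x = {p. ereal (dist p x) < r}"

(* family M_1..M_n rendered as M 0 .. M (n-1) *)
definition PfCl :: "(nat \<Rightarrow> 'a::metric_space set) \<Rightarrow> 'a set set" where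
  "PfCl M = {Y. Y \<noteq> {} \<and> closed Y \<and> dH Y (M 0) < \<infinity>}"

definition SM :: "nat \<Rightarrow> (nat \<Rightarrow> 'a::metric_space set) \<Rightarrow> 'a set \<Rightarrow> ereal" where
  "SM n M Y = (\<Sum>i<n. dH Y (M i))"

definition SigmaM :: "nat \<Rightarrow> (nat \<Rightarrow> 'a::metric_space set) \<Rightarrow> 'a set set" where
  "SigmaM n M = {K \<in> PfCl M. \<forall>Y \<in> PfCl M. SM n M K \<le> SM n M Y}"

definition dvec :: "nat \<Rightarrow> (nat \<Rightarrow> 'a::metric_space set) \<Rightarrow> 'a set \<Rightarrow> nat \<Rightarrow> ereal" where
  "dvec n M K = (\<lambda>i. if i < n then dH K (M i) else 0)"

definition OmegaM :: "nat \<Rightarrow> (nat \<Rightarrow> 'a::metric_space set) \<Rightarrow> (nat \<Rightarrow> ereal) set" where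
  "OmegaM n M = dvec n M ` SigmaM n M"

definition SigmaD :: "nat \<Rightarrow> (nat \<Rightarrow> 'a::metric_space set) \<Rightarrow> (nat \<Rightarrow> ereal) \<Rightarrow> 'a set set" where
  "SigmaD n M d = {K \<in> SigmaM n M. dvec n M K = d}"

definition Kd :: "nat \<Rightarrow> (nat \<Rightarrow> 'a::metric_space set) \<Rightarrow> (nat \<Rightarrow> ereal) \<Rightarrow> 'a set" where
  "Kd n M d = (\<Inter>i<n. Bset (d i) (M i))"

end

theory Submission
  imports Defs
begin

lemma pdist_eq: "A \<noteq> {} \<Longrightarrow> pdist p A = ereal (infdist p A)"
  unfolding pdist_def infdist_notempty
  using ereal_Inf'[of "dist p ` A"] by (simp add: image_comp)

lemma dH_le_iff:
  assumes "A \<noteq> {}" "B \<noteq> {}"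
  shows "dH A B \<le> ereal c \<longleftrightarrow> (\<forall>a\<in>A. infdist a B \<le> c) \<and> (\<forall>b\<in>B. infdist b A \<le> c)"
  using assms by (simp add: dH_def pdist_eq SUP_le_iff)

lemma dH_ge1: "a \<in> A \<Longrightarrow> B \<noteq> {} \<Longrightarrow> ereal (infdist a B) \<le> dH A B"
  unfolding dH_def by (metis SUP_upper max.coboundedI1 pdist_eq)

lemma dH_ge2: "b \<in> B \<Longrightarrow> A \<noteq> {} \<Longrightarrow> ereal (infdist b A) \<le> dH A B"
  unfolding dH_def by (metis SUP_upper max.coboundedI2 pdist_eq)

lemma dH_nonneg: "A \<noteq> {} \<Longrightarrow> B \<noteq> {} \<Longrightarrow> 0 \<le> dH A B"
  by (metis dH_ge1 ex_in_conv infdist_nonneg order.trans zero_ereal_def ereal_less_eq(3))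

lemma dH_bounded:
  assumes "A \<noteq> {}" "B \<noteq> {}" "bounded A" "bounded B"
  shows "\<exists>c. dH A B \<le> ereal c"
proof -
  have "bounded (A \<union> B)" using assms by simp
  then obtain D where D: "\<forall>x\<in>A \<union> B. \<forall>y\<in>A \<union> B. dist x y \<le> D"
    using bounded_two_points by metis
  obtain a b where ab: "a \<in> A" "b \<in> B" using assms by blast
  have "dH A B \<le> ereal D"
    unfolding dH_le_iff[OF assms(1,2)]
    using D ab by (meson UnCI infdist_le2)
  then show ?thesis by blast
qed

lemma infdist_lb:
  fixes x :: "'a::metric_space"
  assumes "A \<noteq> {}" "s \<ge> 0" "\<And>m. m \<in> A \<Longrightarrow> c \<le> s * dist x m + r"
  shows "c \<le> s * infdist x A + r"
proof (cases "s = 0")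
  case True
  then show ?thesis using assms by auto
next
  case False
  then have sp: "s > 0" using assms by simp
  have "(c - r) / s \<le> infdist x A"
    unfolding infdist_notempty[OF assms(1)]
  proof (rule cINF_greatest[OF assms(1)])
    fix m assume "m \<in> A"
    then show "(c - r) / s \<le> dist x m" using assms(3)[of m] sp
      by (simp add: divide_le_eq mult.commute)
  qed
  then show ?thesis using sp by (simp add: divide_le_eq mult.commute)
qed

lemma dist_comb:
  fixes a b m m' :: "'a::real_normed_vector"
  assumes "0 \<le> t" "t \<le> 1"
  shows "dist ((1-t) *\<^sub>R a + t *\<^sub>R b) ((1-t) *\<^sub>R m + t *\<^sub>R m') \<le> (1-t) * dist a m + t * dist b m'"
proof -
  have "(1-t) *\<^sub>R a + t *\<^sub>R b - ((1-t) *\<^sub>R m + t *\<^sub>R m') = (1-t) *\<^sub>R (a - m) + t *\<^sub>R (b - m')"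
    by (simp add: algebra_simps)
  then have "dist ((1-t) *\<^sub>R a + t *\<^sub>R b) ((1-t) *\<^sub>R m + t *\<^sub>R m') = norm ((1-t) *\<^sub>R (a - m) + t *\<^sub>R (b - m'))"
    by (simp add: dist_norm)
  also have "\<dots> \<le> norm ((1-t) *\<^sub>R (a - m)) + norm (t *\<^sub>R (b - m'))" by (rule norm_triangle_ineq)
  also have "\<dots> = (1-t) * dist a m + t * dist b m'" using assms by (simp add: dist_norm)
  finally show ?thesis .
qed

lemma infdist_comb:
  fixes A :: "'a::real_normed_vector set"
  assumes "convex A" "A \<noteq> {}" "0 \<le> t" "t \<le> 1"
  shows "infdist ((1-t) *\<^sub>R a + t *\<^sub>R b) A \<le> (1-t) * infdist a A + t * infdist b A"
proof -
  have "infdist ((1-t) *\<^sub>R a + t *\<^sub>R b) A \<le> (1-t) * infdist a A + t * dist b m'" if m': "m' \<in> A" for m'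
  proof (rule infdist_lb[OF assms(2)])
    show "0 \<le> 1 - t" using assms by simp
    fix m assume m: "m \<in> A"
    have "(1-t) *\<^sub>R m + t *\<^sub>R m' \<in> A" using assms m m' convexD_alt by blast
    then have "infdist ((1-t) *\<^sub>R a + t *\<^sub>R b) A \<le> dist ((1-t) *\<^sub>R a + t *\<^sub>R b) ((1-t) *\<^sub>R m + t *\<^sub>R m')"
      by (rule infdist_le)
    also have "\<dots> \<le> (1-t) * dist a m + t * dist b m'" using dist_comb assms by blast
    finally show "infdist ((1-t) *\<^sub>R a + t *\<^sub>R b) A \<le> (1-t) * dist a m + t * dist b m'" .
  qed
  then have "infdist ((1-t) *\<^sub>R a + t *\<^sub>R b) A \<le> t * infdist b A + (1-t) * infdist a A"
    by (intro infdist_lb[OF assms(2) assms(3)]) (simp add: add.commute)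
  then show ?thesis by simp
qed

lemma convex_on_infdist:
  fixes A :: "'a::real_normed_vector set"
  assumes "convex A" "A \<noteq> {}"
  shows "convex_on UNIV (\<lambda>x. infdist x A)"
  by (rule convex_onI) (use infdist_comb[OF assms] in auto)

lemma SigmaM_fin:
  assumes M: "\<And>i. i < n \<Longrightarrow> M i \<noteq> {} \<and> compact (M i) \<and> convex (M i)"
    and K: "K \<in> SigmaM n M" and i: "i < n"
  shows "\<exists>e. dH K (M i) = ereal e"
proof -
  have Kp: "K \<in> PfCl M" and Kmin: "\<And>Y. Y \<in> PfCl M \<Longrightarrow> SM n M K \<le> SM n M Y"
    using K unfolding SigmaM_def by auto
  have Kne: "K \<noteq> {}" using Kp unfolding PfCl_def by auto
  have fin: "\<exists>c. dH (M 0) (M j) \<le> ereal c" if "j < n" for j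
    using M[of 0] M[of j] i that by (intro dH_bounded) (auto intro: compact_imp_bounded)
  have "M 0 \<in> PfCl M"
    using fin[of 0] M[of 0] i unfolding PfCl_def
    by (auto intro: compact_imp_closed)
  then have "SM n M K \<le> SM n M (M 0)" by (rule Kmin)
  moreover have "SM n M (M 0) \<noteq> \<infinity>"
    unfolding SM_def sum_Pinfty using fin by (metis PInfty_neq_ereal(1) ereal_infty_less_eq(1) lessThan_iff)
  ultimately have "SM n M K \<noteq> \<infinity>" by auto
  then have "dH K (M i) \<noteq> \<infinity>" unfolding SM_def sum_Pinfty using i by auto
  moreover have "dH K (M i) \<ge> 0" using dH_nonneg Kne M[OF i] by blast
  ultimately show ?thesis by (cases "dH K (M i)") auto
qed

lemma part1:
  fixes M :: "nat \<Rightarrow> 'a::real_normed_vector set"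
  assumes n: "n \<ge> 1"
    and M: "\<And>i. i < n \<Longrightarrow> M i \<noteq> {} \<and> compact (M i) \<and> convex (M i)"
    and K: "K \<in> SigmaM n M"
  shows "\<exists>i<n. \<exists>x \<in> M i. Uball (dH K (M i)) x \<inter> K = {}"
proof (rule ccontr)
  assume H: "\<not> ?thesis"
  have Kp: "K \<in> PfCl M" and Kmin: "\<And>Y. Y \<in> PfCl M \<Longrightarrow> SM n M K \<le> SM n M Y"
    using K unfolding SigmaM_def by auto
  have Kne: "K \<noteq> {}" and Kcl: "closed K" using Kp unfolding PfCl_def by auto
  have "\<forall>i<n. \<exists>e. dH K (M i) = ereal e" using SigmaM_fin[OF M K] by blast
  then obtain e where e: "\<And>i. i < n \<Longrightarrow> dH K (M i) = ereal (e i)" by metis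
  have Kle: "infdist k (M i) \<le> e i" if "i < n" "k \<in> K" for i k
    using dH_ge1[OF that(2), of "M i"] M[OF that(1)] e[OF that(1)] by simp
  have H': "\<exists>p\<in>K. dist p x < e i" if "i < n" "x \<in> M i" for i x
    using H that e unfolding Uball_def by fastforce
  have "\<exists>k\<in>K. infdist k (M i) < e i" if i: "i < n" for i
  proof -
    obtain x where "x \<in> M i" using M[OF i] by blast
    then obtain p where "p \<in> K" "dist p x < e i" using H' i by blast
    then show ?thesis using infdist_le[OF \<open>x \<in> M i\<close>, of p] by force
  qed
  then obtain kk where kk: "\<And>i. i < n \<Longrightarrow> kk i \<in> K \<and> infdist (kk i) (M i) < e i" by metis
  have "\<exists>r. r < e i \<and> (\<forall>x\<in>M i. infdist x K \<le> r)" if i: "i < n" for i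
  proof -
    obtain x0 where x0: "x0 \<in> M i" "\<forall>y\<in>M i. infdist y K \<le> infdist x0 K"
      using continuous_attains_sup[of "M i" "\<lambda>x. infdist x K"] M[OF i]
        continuous_on_infdist[OF continuous_on_id, of "M i" K]
      by blast
    obtain p where "p \<in> K" "dist p x0 < e i" using H' i x0 by blast
    then have "infdist x0 K < e i" using infdist_le[of p K x0] by (simp add: dist_commute)
    then show ?thesis using x0 by blast
  qed
  then obtain r where r: "\<And>i. i < n \<Longrightarrow> r i < e i \<and> (\<forall>x\<in>M i. infdist x K \<le> r i)" by metis
  define z where "z = (\<Sum>i<n. (1 / real n) *\<^sub>R kk i)"
  have hz: "infdist z (M j) < e j" if j: "j < n" for j
  proof -
    have "infdist z (M j) \<le> (\<Sum>i<n. (1 / real n) * infdist (kk i) (M j))"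
      unfolding z_def using n
      by (intro convex_on_sum[OF _ _ convex_on_infdist]) (use M[OF j] in \<open>auto simp: lessThan_empty_iff\<close>)
    also have "\<dots> < (\<Sum>i<n. (1 / real n) * e j)"
    proof (rule sum_strict_mono_ex1)
      show "\<forall>x\<in>{..<n}. 1 / real n * infdist (kk x) (M j) \<le> 1 / real n * e j"
        using Kle kk j by (auto intro!: divide_right_mono)
      show "\<exists>a\<in>{..<n}. 1 / real n * infdist (kk a) (M j) < 1 / real n * e j"
        using kk[OF j] j n by (intro bexI[of _ j]) (auto intro!: divide_strict_right_mono)
    qed simp
    also have "\<dots> = e j" using n by simp
    finally show ?thesis .
  qed
  have "\<exists>D. \<forall>x\<in>M j. dist x z \<le> D" if j: "j < n" for j
    using bounded_any_center[of "M j" z] M[OF j] compact_imp_bounded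
    by (metis dist_commute)
  then obtain D where D: "\<And>j x. j < n \<Longrightarrow> x \<in> M j \<Longrightarrow> dist x z \<le> D j" by metis
  have ev: "\<forall>\<^sub>F t in at_right 0. 0 < t \<and> t < 1 \<and> (\<forall>j\<in>{..<n}.
      (1-t) * r j + t * D j < e j \<and> (1-t) * e j + t * infdist z (M j) < e j)"
  proof (intro eventually_conj eventually_ball_finite ballI)
    show "\<forall>\<^sub>F t in at_right 0. 0 < (t::real)" by (simp add: eventually_at_right_less)
    have "((\<lambda>t::real. t) \<longlongrightarrow> 0) (at_right 0)" by (rule tendsto_ident_at)
    then show "\<forall>\<^sub>F t in at_right 0. t < (1::real)" by (rule order_tendstoD) simp
    show "finite {..<n}" by simp
    fix j assume j: "j \<in> {..<n}"
    have "((\<lambda>t::real. (1-t) * r j + t * D j) \<longlongrightarrow> (1-0) * r j + 0 * D j) (at_right 0)"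
      by (intro tendsto_intros)
    then show "\<forall>\<^sub>F t in at_right 0. (1-t) * r j + t * D j < e j"
      by (rule order_tendstoD) (use r j in simp)
    have "\<forall>\<^sub>F t in at_right 0. 0 < (t::real)" by (simp add: eventually_at_right_less)
    then show "\<forall>\<^sub>F t in at_right 0. (1-t) * e j + t * infdist z (M j) < e j"
    proof (rule eventually_mono)
      fix t :: real assume "0 < t"
      then have "t * infdist z (M j) < t * e j" using hz j by simp
      then show "(1-t) * e j + t * infdist z (M j) < e j" by (simp add: algebra_simps)
    qed
  qed
  obtain t where t: "0 < t" "t < 1" and tj: "\<And>j. j < n \<Longrightarrow>
      (1-t) * r j + t * D j < e j \<and> (1-t) * e j + t * infdist z (M j) < e j"
    using eventually_happens'[OF _ ev] by auto
  define Y where "Y = (\<lambda>k. (1-t) *\<^sub>R k + t *\<^sub>R z) ` K"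
  have Yne: "Y \<noteq> {}" using Kne Y_def by simp
  have "Y = (+) (t *\<^sub>R z) ` ((\<lambda>k. (1-t) *\<^sub>R k) ` K)" unfolding Y_def image_image
    by (simp add: add.commute)
  then have Ycl: "closed Y" using closed_translation closed_scaling Kcl by metis
  define c where "c j = max ((1-t) * r j + t * D j) ((1-t) * e j + t * infdist z (M j))" for j
  have Yb: "dH Y (M j) \<le> ereal (c j)" if j: "j < n" for j
    unfolding dH_le_iff[OF Yne conjunct1[OF M[OF j]]]
  proof safe
    fix y assume "y \<in> Y"
    then obtain k where k: "k \<in> K" "y = (1-t) *\<^sub>R k + t *\<^sub>R z" unfolding Y_def by auto
    have "infdist y (M j) \<le> (1-t) * infdist k (M j) + t * infdist z (M j)"
      using k infdist_comb[of "M j" t k z] M[OF j] t by simp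
    also have "\<dots> \<le> (1-t) * e j + t * infdist z (M j)"
      using Kle[OF j k(1)] t by simp
    finally show "infdist y (M j) \<le> c j" unfolding c_def by simp
  next
    fix x assume x: "x \<in> M j"
    have "infdist x Y \<le> (1-t) * infdist x K + t * dist x z"
    proof (rule infdist_lb[OF Kne])
      show "0 \<le> 1 - t" using t by simp
      fix k assume k: "k \<in> K"
      have "infdist x Y \<le> dist x ((1-t) *\<^sub>R k + t *\<^sub>R z)"
        using k by (intro infdist_le) (auto simp: Y_def)
      also have "\<dots> = dist ((1-t) *\<^sub>R x + t *\<^sub>R x) ((1-t) *\<^sub>R k + t *\<^sub>R z)"
        by (simp add: scaleR_left_distrib[symmetric])
      also have "\<dots> \<le> (1-t) * dist x k + t * dist x z" by (rule dist_comb) (use t in auto)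
      finally show "infdist x Y \<le> (1 - t) * dist x k + t * dist x z" .
    qed
    also have "\<dots> \<le> (1-t) * r j + t * D j"
      using r[OF j] D[OF j x] x t by (intro add_mono mult_left_mono) auto
    finally show "infdist x Y \<le> c j" unfolding c_def by simp
  qed
  have c_lt: "c j < e j" if "j < n" for j using tj[OF that] unfolding c_def by simp
  have "Y \<in> PfCl M"
    unfolding PfCl_def using Yne Ycl Yb[of 0] n
    by (auto intro: le_less_trans)
  then have "SM n M K \<le> SM n M Y" by (rule Kmin)
  moreover have "SM n M Y \<le> ereal (\<Sum>j<n. c j)"
    unfolding SM_def sum_ereal[symmetric] by (intro sum_mono) (use Yb in auto)
  moreover have "(\<Sum>j<n. c j) < (\<Sum>j<n. e j)"
    using n c_lt by (intro sum_strict_mono) (auto simp: lessThan_empty_iff)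
  moreover have "SM n M K = ereal (\<Sum>j<n. e j)"
    unfolding SM_def sum_ereal[symmetric] by (intro sum.cong) (use e in auto)
  ultimately have "ereal (\<Sum>j<n. e j) \<le> ereal (\<Sum>j<n. c j)" by (metis order.trans)
  then show False using \<open>(\<Sum>j<n. c j) < (\<Sum>j<n. e j)\<close> by simp
qed

theorem mainTheorem19:
  fixes M :: "nat \<Rightarrow> 'a::real_normed_vector set" and n :: nat and d :: "nat \<Rightarrow> ereal"
  assumes "n \<ge> 1"
    and "\<And>i. i < n \<Longrightarrow> M i \<noteq> {} \<and> compact (M i) \<and> convex (M i)"
    and "SigmaM n M \<noteq> {}"
    and "d \<in> OmegaM n M"
  shows "(\<forall>K \<in> SigmaD n M d. \<exists>i<n. \<exists>x \<in> M i. Uball (d i) x \<inter> K = {})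
         \<and> (\<exists>i<n. \<exists>x \<in> M i. Uball (d i) x \<inter> Kd n M d = {})"
proof -
  note n = assms(1) and M = assms(2)
  have P1: "\<exists>i<n. \<exists>x \<in> M i. Uball (d i) x \<inter> K = {}" if K: "K \<in> SigmaD n M d" for K
  proof -
    have K1: "K \<in> SigmaM n M" and K2: "dvec n M K = d" using K unfolding SigmaD_def by auto
    obtain i x where ix: "i < n" "x \<in> M i" "Uball (dH K (M i)) x \<inter> K = {}"
      using part1[OF n M K1] by blast
    have "d i = dH K (M i)" using K2 \<open>i < n\<close> unfolding dvec_def by auto
    then have "Uball (d i) x \<inter> K = {}" using ix(3) by simp
    then show ?thesis using ix(1,2) by blast
  qed
  obtain K0 where K0: "K0 \<in> SigmaM n M" and dK0: "d = dvec n M K0"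
    using assms(4) unfolding OmegaM_def by auto
  have K0p: "K0 \<in> PfCl M" and K0min: "\<And>Y. Y \<in> PfCl M \<Longrightarrow> SM n M K0 \<le> SM n M Y"
    using K0 unfolding SigmaM_def by auto
  have K0ne: "K0 \<noteq> {}" using K0p unfolding PfCl_def by auto
  have "\<forall>i<n. \<exists>e. dH K0 (M i) = ereal e" using SigmaM_fin[OF M K0] by blast
  then obtain e where e: "\<And>i. i < n \<Longrightarrow> dH K0 (M i) = ereal (e i)" by metis
  have de: "d i = ereal (e i)" if "i < n" for i using dK0 e that unfolding dvec_def by auto
  have Kdeq: "Kd n M d = (\<Inter>i<n. {p. infdist p (M i) \<le> e i})"
    unfolding Kd_def Bset_def
  proof (rule INF_cong[OF refl])
    fix i assume i: "i \<in> {..<n}"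
    show "{p. pdist p (M i) \<le> d i} = {p. infdist p (M i) \<le> e i}"
      using de[of i] pdist_eq[of "M i"] M[of i] i by simp
  qed
  have K0sub: "K0 \<subseteq> Kd n M d"
    unfolding Kdeq
  proof (intro subsetI INT_I CollectI)
    fix p i assume p: "p \<in> K0" and i: "i \<in> {..<n}"
    show "infdist p (M i) \<le> e i" using dH_ge1[OF p, of "M i"] e[of i] M[of i] i by simp
  qed
  have Kdne: "Kd n M d \<noteq> {}" using K0sub K0ne by blast
  have Kdcl: "closed (Kd n M d)"
    unfolding Kdeq
    by (intro closed_INT ballI closed_Collect_le continuous_on_infdist continuous_on_id continuous_on_const)
  have Kdb: "dH (Kd n M d) (M i) \<le> ereal (e i)" if i: "i < n" for i
    unfolding dH_le_iff[OF Kdne conjunct1[OF M[OF i]]]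
  proof safe
    fix y assume "y \<in> Kd n M d" then show "infdist y (M i) \<le> e i" unfolding Kdeq using i by auto
  next
    fix x assume x: "x \<in> M i"
    have "infdist x (Kd n M d) \<le> infdist x K0" by (rule infdist_mono[OF K0sub K0ne])
    also have "\<dots> \<le> e i" using dH_ge2[OF x K0ne] e[OF i] by simp
    finally show "infdist x (Kd n M d) \<le> e i" .
  qed
  have Kdp: "Kd n M d \<in> PfCl M"
    unfolding PfCl_def using Kdne Kdcl Kdb[of 0] n by (auto intro: le_less_trans)
  have "SM n M (Kd n M d) \<le> SM n M K0"
    unfolding SM_def by (intro sum_mono) (use Kdb e in auto)
  then have KdS: "Kd n M d \<in> SigmaM n M"
    unfolding SigmaM_def using Kdp K0min order.trans by blast
  have "\<forall>i<n. \<exists>a. dH (Kd n M d) (M i) = ereal a" using SigmaM_fin[OF M KdS] by blast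
  then obtain a where a: "\<And>i. i < n \<Longrightarrow> dH (Kd n M d) (M i) = ereal (a i)" by metis
  have ale: "a i \<le> e i" if "i < n" for i using Kdb[OF that] a[OF that] by simp
  have aeq: "a i = e i" if i: "i < n" for i
  proof (rule ccontr)
    assume "a i \<noteq> e i"
    then have "a i < e i" using ale[OF i] by simp
    then have "(\<Sum>j<n. a j) < (\<Sum>j<n. e j)"
      using ale i by (intro sum_strict_mono_ex1) auto
    moreover have "SM n M (Kd n M d) = ereal (\<Sum>j<n. a j)"
      unfolding SM_def sum_ereal[symmetric] by (intro sum.cong) (use a in auto)
    moreover have "SM n M K0 = ereal (\<Sum>j<n. e j)"
      unfolding SM_def sum_ereal[symmetric] by (intro sum.cong) (use e in auto)
    moreover have "SM n M K0 \<le> SM n M (Kd n M d)" using K0min Kdp by blast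
    ultimately show False by simp
  qed
  have "dvec n M (Kd n M d) = dvec n M K0"
    unfolding dvec_def
  proof (rule ext)
    fix i show "(if i < n then dH (Kd n M d) (M i) else 0) = (if i < n then dH K0 (M i) else 0)"
      using a[of i] e[of i] aeq[of i] by simp
  qed
  then have "Kd n M d \<in> SigmaD n M d" using KdS dK0 unfolding SigmaD_def by simp
  then show ?thesis using P1 by blast
qed

end
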